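(* Let $\mathfrak{A}=(Q,\Sigma_I\times\Sigma_O,q_\iota,\delta,\Omega)$ be a deterministic parity automaton and let $k>0$. If Player~$O$ wins the game $\mathcal{G}_k$, then she wins the delay game $\Gamma_{2k-1}(L(\mathfrak{A}))$.
   Context: DPA: $\mathfrak{A}$ has finite state set $Q$, initial state $q_\iota$, transition function $\delta\colon Q\times(\Sigma_I\times\Sigma_O)\to Q$, coloring $\Omega\colon Q\to\mathbb{N}$; a run $q_0q_1\cdots$ ($q_0=q_\iota$, $q_{i+1}=\delta(q_i,\text{$i$-th letter})$) is accepting iff $\limsup_i\Omega(q_i)$ is even; $L(\mathfrak{A})$ is the set of words with accepting run. Delay game $\Gamma_m(L)$: in round $0$ Player~$I$ picks $a_0\cdots a_m\in\Sigma_I$, then Player~$O$ picks $b_0\in\Sigma_O$; in round $i>0$ Player~$I$ picks $a_{m+i}$, then Player~$O$ picks $b_i$. A strategy for $O$ is $\sigma\colon\Sigma_I^*\to\Sigma_O$, an outcome is consistent with it if $b_i=\sigma(a_0\cdots a_{i+m})$ for all $i$, it is winning if all consistent outcomes $\binom{a_0}{b_0}\binom{a_1}{b_1}\cdots$ lie in $L$, and $O$ wins if she has a winning strategy. The game $\mathcal{G}_k$: let $C=\Omega(Q)$. Define $\delta_\mathcal{T}((q,c),\binom{a}{b})=(q',\max\{c,\Omega(q')\})$ with $q'=\delta(q,\binom{a}{b})$, and $\delta_\mathcal{P}\colon 2^{Q\times C}\times\Sigma_I\to 2^{Q\times C}$ by $\delta_\mathcal{P}(S,a)=\bigcup_{(q,c)\in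 S}\bigcup_{b\in\Sigma_O}\{\delta_\mathcal{T}((q,c),\binom{a}{b})\}$, extended to words by $\delta^*_\mathcal{P}(S,\epsilon)=S$, $\delta^*_\mathcal{P}(S,wa)=\delta_\mathcal{P}(\delta^*_\mathcal{P}(S,w),a)$. For nonempty $D\subseteq Q\times C$ and $w\in\Sigma_I^*$ let $r^D_w\colon D\to 2^{Q\times C}$, $r^D_w(q,c)=\delta^*_\mathcal{P}(\{(q,\Omega(q))\},w)$. Let $\mathfrak{R}=\{r^D_w : w\in\Sigma_I^k,\ \emptyset\ne D\subseteq Q\times C\}$ (partial functions $Q\times C\rightharpoonup 2^{Q\times C}$ with domain $\mathrm{dom}(r)$). In $\mathcal{G}_k$, in each round $i\in\mathbb{N}$ Player~$I$ picks $r_i\in\mathfrak{R}$ and then Player~$O$ picks $(q_i,c_i)\in Q\times C$, subject to: $\mathrm{dom}(r_0)=\{(q_\iota,\Omega(q_\iota))\}$, $\mathrm{dom}(r_i)=r_{i-1}(q_{i-1},c_{i-1})$ for $i>0$, and $(q_i,c_i)\in\mathrm{dom}(r_i)$ for all $i$. A play is won by Player~$O$ iff $\limsup_i c_i$ is even. A strategy for $O$ maps each prefix $r_0(q_0,c_0)\cdots r_i$ to a legal $(q_i,c_i)$; she wins $\mathcal{G}_k$ if she has a strategy all of whose consistent plays she wins. *)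

theory Defs
  imports Main "HOL-Library.Extended_Nat" "HOL-Library.Liminf_Limsup"
begin

record ('q, 'a, 'b) dpa =
  init  :: 'q
  delta :: "'q \<Rightarrow> 'a \<times> 'b \<Rightarrow> 'q"
  col   :: "'q \<Rightarrow> nat"

fun run :: "('q, 'a, 'b) dpa \<Rightarrow> (nat \<Rightarrow> 'a \<times> 'b) \<Rightarrow> nat \<Rightarrow> 'q" where
  "run A w 0 = init A"
| "run A w (Suc i) = delta A (run A w i) (w i)"

definition limsup_even :: "(nat \<Rightarrow> nat) \<Rightarrow> bool" where
  "limsup_even f \<longleftrightarrow> (\<exists>n. limsup (\<lambda>i. enat (f i)) = enat n \<and> even n)"

definition lang :: "('q, 'a, 'b) dpa \<Rightarrow> (nat \<Rightarrow> 'a \<times> 'b) set" where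
  "lang A = {w. limsup_even (\<lambda>i. col A (run A w i))}"

definition delay_outcome :: "nat \<Rightarrow> ('a list \<Rightarrow> 'b) \<Rightarrow> (nat \<Rightarrow> 'a) \<Rightarrow> nat \<Rightarrow> 'a \<times> 'b" where
  "delay_outcome m \<sigma> \<alpha> = (\<lambda>i. (\<alpha> i, \<sigma> (map \<alpha> [0..<i + m + 1])))"

definition wins_delay :: "nat \<Rightarrow> (nat \<Rightarrow> 'a \<times> 'b) set \<Rightarrow> bool" where
  "wins_delay m L \<longleftrightarrow> (\<exists>\<sigma> :: 'a list \<Rightarrow> 'b. \<forall>\<alpha>. delay_outcome m \<sigma> \<alpha> \<in> L)"

definition colors :: "('q, 'a, 'b) dpa \<Rightarrow> nat set" where
  "colors A = range (col A)"

definition deltaT :: "('q, 'a, 'b) dpa \<Rightarrow> 'q \<times> nat \<Rightarrow> 'a \<times> 'b \<Rightarrow> 'q \<times> nat" where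
  "deltaT A qc ab = (let q' = delta A (fst qc) ab in (q', max (snd qc) (col A q')))"

definition deltaP :: "('q, 'a, 'b) dpa \<Rightarrow> ('q \<times> nat) set \<Rightarrow> 'a \<Rightarrow> ('q \<times> nat) set" where
  "deltaP A S a = (\<Union>qc\<in>S. \<Union>b\<in>(UNIV :: 'b set). {deltaT A qc (a, b)})"

fun deltaP_star :: "('q, 'a, 'b) dpa \<Rightarrow> ('q \<times> nat) set \<Rightarrow> 'a list \<Rightarrow> ('q \<times> nat) set" where
  "deltaP_star A S w = foldl (deltaP A) S w"

definition rfun :: "('q, 'a, 'b) dpa \<Rightarrow> ('q \<times> nat) set \<Rightarrow> 'a list \<Rightarrow> 'q \<times> nat \<Rightarrow> ('q \<times> nat) set option" where
  "rfun A D w = (\<lambda>qc. if qc \<in> D then Some (deltaP_star A {(fst qc, col A (fst qc))} w) else None)"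

definition Rset :: "('q, 'a, 'b) dpa \<Rightarrow> nat \<Rightarrow> ('q \<times> nat \<Rightarrow> ('q \<times> nat) set option) set" where
  "Rset A k = {rfun A D w | D w. D \<noteq> {} \<and> D \<subseteq> UNIV \<times> colors A \<and> length w = k}"

definition I_legal :: "('q, 'a, 'b) dpa \<Rightarrow> nat \<Rightarrow> (nat \<Rightarrow> 'q \<times> nat \<Rightarrow> ('q \<times> nat) set option)
    \<Rightarrow> (nat \<Rightarrow> 'q \<times> nat) \<Rightarrow> nat \<Rightarrow> bool" where
  "I_legal A k r p i \<longleftrightarrow> r i \<in> Rset A k \<and>
     dom (r i) = (if i = 0 then {(init A, col A (init A))} else the (r (i - 1) (p (i - 1))))"

text \<open>Strategy for O: maps r_0 ... r_i and (q_0,c_0) ... (q_{i-1},c_{i-1}) to (q_i,c_i).\<close>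
type_synonym ('q) gk_strategy =
  "('q \<times> nat \<Rightarrow> ('q \<times> nat) set option) list \<Rightarrow> ('q \<times> nat) list \<Rightarrow> 'q \<times> nat"

definition consistent_upto :: "'q gk_strategy \<Rightarrow> (nat \<Rightarrow> 'q \<times> nat \<Rightarrow> ('q \<times> nat) set option)
    \<Rightarrow> (nat \<Rightarrow> 'q \<times> nat) \<Rightarrow> nat \<Rightarrow> bool" where
  "consistent_upto \<sigma> r p n \<longleftrightarrow> (\<forall>i<n. p i = \<sigma> (map r [0..<Suc i]) (map p [0..<i]))"

definition legal_strategy :: "('q, 'a, 'b) dpa \<Rightarrow> nat \<Rightarrow> 'q gk_strategy \<Rightarrow> bool" where
  "legal_strategy A k \<sigma> \<longleftrightarrow> (\<forall>r p n. (\<forall>i\<le>n. I_legal A k r p i) \<and> consistent_upto \<sigma> r p n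
      \<longrightarrow> \<sigma> (map r [0..<Suc n]) (map p [0..<n]) \<in> dom (r n))"

definition wins_Gk :: "('q, 'a, 'b) dpa \<Rightarrow> nat \<Rightarrow> bool" where
  "wins_Gk A k \<longleftrightarrow> (\<exists>\<sigma>. legal_strategy A k \<sigma> \<and>
     (\<forall>r p. (\<forall>i. I_legal A k r p i) \<and> (\<forall>n. consistent_upto \<sigma> r p n)
        \<longrightarrow> limsup_even (\<lambda>i. snd (p i))))"

end

theory Submission
  imports Defs
begin

lemma limsup_enat_upper:
  assumes "\<forall>m\<ge>N. f m \<le> n"
  shows "limsup (\<lambda>i. enat (f i)) \<le> enat n"
proof -
  have "(SUP m\<in>{N..}. enat (f m)) \<le> enat n"
    using assms by (intro SUP_least) auto
  then show ?thesis unfolding limsup_INF_SUP by (meson INF_lower UNIV_I order_trans)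
qed

lemma limsup_enat_lower:
  assumes "\<forall>N. \<exists>m\<ge>N. f m \<ge> n"
  shows "enat n \<le> limsup (\<lambda>i. enat (f i))"
  unfolding limsup_INF_SUP
proof (intro INF_greatest)
  fix N :: nat
  obtain m where "m \<ge> N" "f m \<ge> n" using assms by blast
  then show "enat n \<le> (SUP m\<in>{N..}. enat (f m))"
    by (meson SUP_upper atLeast_iff enat_ord_simps(1) order_trans)
qed

lemma limsup_enat_char:
  assumes "limsup (\<lambda>i. enat (g i)) = enat n"
  shows "(\<exists>N. \<forall>m\<ge>N. g m \<le> n) \<and> (\<forall>N. \<exists>m\<ge>N. g m = n)"
proof -
  have a: "\<exists>N. \<forall>m\<ge>N. g m \<le> n"
  proof (rule ccontr)
    assume "\<not> ?thesis"
    then have "\<forall>N. \<exists>m\<ge>N. g m \<ge> Suc n" by (meson not_less_eq_eq)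
    from limsup_enat_lower[OF this] assms show False by simp
  qed
  then obtain N1 where N1: "\<forall>m\<ge>N1. g m \<le> n" by blast
  have "\<forall>N. \<exists>m\<ge>N. g m = n"
  proof (rule ccontr)
    assume "\<not> ?thesis"
    then obtain N0 where N0: "\<forall>m\<ge>N0. g m \<noteq> n" by blast
    have lt: "\<forall>m\<ge>max N0 N1. g m < n" using N0 N1 by (metis max.boundedE order_le_neq_trans)
    show False
    proof (cases n)
      case 0 then show False using lt by blast
    next
      case (Suc n')
      have "\<forall>m\<ge>max N0 N1. g m \<le> n'" using lt Suc by (metis less_Suc_eq_le)
      from limsup_enat_upper[OF this] assms Suc show False by simp
    qed
  qed
  with a show ?thesis by blast
qed

lemma foldl_deltaP_mem:
  "x \<in> foldl (deltaP A) S w \<longleftrightarrow>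
     (\<exists>s\<in>S. \<exists>bs. length bs = length w \<and> foldl (deltaT A) s (zip w bs) = x)"
proof (induction w arbitrary: x rule: rev_induct)
  case Nil then show ?case by auto
next
  case (snoc a w)
  show ?case
  proof
    assume "x \<in> foldl (deltaP A) S (w @ [a])"
    then obtain y b where y: "y \<in> foldl (deltaP A) S w" and x: "x = deltaT A y (a, b)"
      by (auto simp: deltaP_def)
    from y snoc.IH obtain s bs where "s \<in> S" "length bs = length w" "foldl (deltaT A) s (zip w bs) = y"
      by blast
    then show "\<exists>s\<in>S. \<exists>bs. length bs = length (w @ [a]) \<and> foldl (deltaT A) s (zip (w @ [a]) bs) = x"
      using x by (intro bexI[of _ s] exI[of _ "bs @ [b]"]) auto
  next
    assume "\<exists>s\<in>S. \<exists>bs. length bs = length (w @ [a]) \<and> foldl (deltaT A) s (zip (w @ [a]) bs) = x"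
    then obtain s bs where s: "s \<in> S" and l: "length bs = length (w @ [a])"
      and f: "foldl (deltaT A) s (zip (w @ [a]) bs) = x" by blast
    obtain bs' b where bs: "bs = bs' @ [b]" using l by (cases bs rule: rev_cases) auto
    have l': "length bs' = length w" using l bs by simp
    have "foldl (deltaT A) s (zip w bs') \<in> foldl (deltaP A) S w" using snoc.IH s l' by blast
    moreover have "x = deltaT A (foldl (deltaT A) s (zip w bs')) (a, b)" using f bs l' by simp
    ultimately show "x \<in> foldl (deltaP A) S (w @ [a])" by (auto simp: deltaP_def)
  qed
qed

lemma foldl_deltaP_ne:
  "S \<noteq> {} \<Longrightarrow> foldl (deltaP A) S w \<noteq> {}"
proof (induction w arbitrary: S)
  case Nil then show ?case by simp
next
  case (Cons a w)
  have "deltaP A S a \<noteq> {}" using Cons.prems by (auto simp: deltaP_def)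
  then show ?case using Cons.IH by simp
qed

lemma foldl_deltaP_colors:
  "S \<subseteq> UNIV \<times> colors A \<Longrightarrow> foldl (deltaP A) S w \<subseteq> UNIV \<times> colors A"
proof (induction w arbitrary: S)
  case Nil then show ?case by simp
next
  case (Cons a w)
  have "deltaP A S a \<subseteq> UNIV \<times> colors A" using Cons.prems
    by (force simp: deltaP_def deltaT_def Let_def colors_def max_def)
  then show ?case using Cons.IH by simp
qed

definition blk :: "nat \<Rightarrow> (nat \<Rightarrow> 'a) \<Rightarrow> nat \<Rightarrow> 'a list" where
  "blk k \<alpha> n = map \<alpha> [n * k..<Suc n * k]"

fun hist :: "('q, 'a, 'b) dpa \<Rightarrow> nat \<Rightarrow> 'q gk_strategy \<Rightarrow> (nat \<Rightarrow> 'a) \<Rightarrow> nat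
    \<Rightarrow> ('q \<times> nat \<Rightarrow> ('q \<times> nat) set option) list \<times> ('q \<times> nat) list" where
  "hist A k \<sigma> \<alpha> 0 = ([], [])"
| "hist A k \<sigma> \<alpha> (Suc n) = (let rs = fst (hist A k \<sigma> \<alpha> n); ps = snd (hist A k \<sigma> \<alpha> n);
     D = (if n = 0 then {(init A, col A (init A))} else the (last rs (last ps)));
     r = rfun A D (blk k \<alpha> n) in (rs @ [r], ps @ [\<sigma> (rs @ [r]) ps]))"

definition RR where "RR A k \<sigma> \<alpha> i = fst (hist A k \<sigma> \<alpha> (Suc i)) ! i"
definition PP where "PP A k \<sigma> \<alpha> i = snd (hist A k \<sigma> \<alpha> (Suc i)) ! i"

lemma hist_eq:
  "hist A k \<sigma> \<alpha> n = (map (RR A k \<sigma> \<alpha>) [0..<n], map (PP A k \<sigma> \<alpha>) [0..<n])"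
proof (induction n)
  case 0 then show ?case by simp
next
  case (Suc n)
  have "hist A k \<sigma> \<alpha> (Suc n) = (fst (hist A k \<sigma> \<alpha> n) @ [fst (hist A k \<sigma> \<alpha> (Suc n)) ! n],
     snd (hist A k \<sigma> \<alpha> n) @ [snd (hist A k \<sigma> \<alpha> (Suc n)) ! n])"
    using Suc by (simp add: Let_def nth_append)
  then show ?case using Suc by (simp add: RR_def PP_def)
qed

lemma RR_0: "RR A k \<sigma> \<alpha> 0 = rfun A {(init A, col A (init A))} (blk k \<alpha> 0)"
  by (simp add: RR_def Let_def)

lemma RR_Suc: "RR A k \<sigma> \<alpha> (Suc n) = rfun A (the (RR A k \<sigma> \<alpha> n (PP A k \<sigma> \<alpha> n))) (blk k \<alpha> (Suc n))"
proof -
  have "RR A k \<sigma> \<alpha> (Suc n) = fst (hist A k \<sigma> \<alpha> (Suc (Suc n))) ! Suc n" by (simp add: RR_def)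
  also have "\<dots> = rfun A (the (last (map (RR A k \<sigma> \<alpha>) [0..<Suc n]) (last (map (PP A k \<sigma> \<alpha>) [0..<Suc n])))) (blk k \<alpha> (Suc n))"
    unfolding hist.simps(2)[of A k \<sigma> \<alpha> "Suc n"] hist_eq[of A k \<sigma> \<alpha> "Suc n"] Let_def
    by (simp add: nth_append del: upt_Suc)
  finally show ?thesis by simp
qed

lemma PP_eq: "PP A k \<sigma> \<alpha> n = \<sigma> (map (RR A k \<sigma> \<alpha>) [0..<Suc n]) (map (PP A k \<sigma> \<alpha>) [0..<n])"
proof -
  have "PP A k \<sigma> \<alpha> n = snd (hist A k \<sigma> \<alpha> (Suc n)) ! n" by (simp add: PP_def)
  also have "\<dots> = \<sigma> (map (RR A k \<sigma> \<alpha>) [0..<n] @ [fst (hist A k \<sigma> \<alpha> (Suc n)) ! n]) (map (PP A k \<sigma> \<alpha>) [0..<n])"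
    unfolding hist.simps(2)[of A k \<sigma> \<alpha> n] hist_eq[of A k \<sigma> \<alpha> n] Let_def
    by (simp add: nth_append del: upt_Suc)
  finally show ?thesis by (simp add: RR_def)
qed

lemma hist_local:
  assumes "\<forall>m < n * k. \<alpha> m = \<beta> m"
  shows "hist A k \<sigma> \<alpha> n = hist A k \<sigma> \<beta> n"
  using assms
proof (induction n)
  case 0 then show ?case by simp
next
  case (Suc n)
  have "\<forall>m < n * k. \<alpha> m = \<beta> m" using Suc.prems
    by (meson less_le_trans mult_le_mono1 le_SucI order_refl)
  then have IH: "hist A k \<sigma> \<alpha> n = hist A k \<sigma> \<beta> n" using Suc.IH by blast
  have "blk k \<alpha> n = blk k \<beta> n" using Suc.prems by (auto simp: blk_def)
  then show ?case using IH by (simp add: Let_def)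
qed

lemma dom_rfun: "dom (rfun A D w) = D"
  by (auto simp: rfun_def dom_def)

lemma rfun_in: "qc \<in> D \<Longrightarrow> rfun A D w qc = Some (deltaP_star A {(fst qc, col A (fst qc))} w)"
  by (simp add: rfun_def)

lemma length_blk: "length (blk k \<alpha> n) = k"
  by (simp add: blk_def)

lemma RR_form: "RR A k \<sigma> \<alpha> n = rfun A (dom (RR A k \<sigma> \<alpha> n)) (blk k \<alpha> n)"
  by (cases n) (simp_all add: RR_0 RR_Suc dom_rfun)

lemma consistent_PP: "consistent_upto \<sigma> (RR A k \<sigma> \<alpha>) (PP A k \<sigma> \<alpha>) n"
  unfolding consistent_upto_def using PP_eq by blast

lemma dom_RR_Suc:
  assumes "PP A k \<sigma> \<alpha> n \<in> dom (RR A k \<sigma> \<alpha> n)"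
  shows "dom (RR A k \<sigma> \<alpha> (Suc n)) = deltaP_star A {(fst (PP A k \<sigma> \<alpha> n), col A (fst (PP A k \<sigma> \<alpha> n)))} (blk k \<alpha> n)"
proof -
  have "RR A k \<sigma> \<alpha> n (PP A k \<sigma> \<alpha> n) = Some (deltaP_star A {(fst (PP A k \<sigma> \<alpha> n), col A (fst (PP A k \<sigma> \<alpha> n)))} (blk k \<alpha> n))"
    using assms RR_form[of A k \<sigma> \<alpha> n] rfun_in by metis
  then show ?thesis by (simp add: RR_Suc dom_rfun)
qed

lemma dom_RR_props:
  assumes "\<forall>j<n. PP A k \<sigma> \<alpha> j \<in> dom (RR A k \<sigma> \<alpha> j)"
  shows "dom (RR A k \<sigma> \<alpha> n) \<noteq> {} \<and> dom (RR A k \<sigma> \<alpha> n) \<subseteq> UNIV \<times> colors A"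
proof (cases n)
  case 0 then show ?thesis by (simp add: RR_0 dom_rfun colors_def)
next
  case (Suc m)
  then have d: "dom (RR A k \<sigma> \<alpha> n) = foldl (deltaP A) {(fst (PP A k \<sigma> \<alpha> m), col A (fst (PP A k \<sigma> \<alpha> m)))} (blk k \<alpha> m)"
    using dom_RR_Suc[of A k \<sigma> \<alpha> m] assms by simp
  show ?thesis unfolding d
    by (intro conjI foldl_deltaP_ne foldl_deltaP_colors) (auto simp: colors_def)
qed

lemma I_legal_PP:
  assumes "\<forall>j<n. PP A k \<sigma> \<alpha> j \<in> dom (RR A k \<sigma> \<alpha> j)"
  shows "I_legal A k (RR A k \<sigma> \<alpha>) (PP A k \<sigma> \<alpha>) n"
proof -
  have "RR A k \<sigma> \<alpha> n \<in> Rset A k"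
    unfolding Rset_def using dom_RR_props[OF assms] RR_form[of A k \<sigma> \<alpha> n] length_blk
    by blast
  moreover have "dom (RR A k \<sigma> \<alpha> n) = (if n = 0 then {(init A, col A (init A))}
      else the (RR A k \<sigma> \<alpha> (n - 1) (PP A k \<sigma> \<alpha> (n - 1))))"
    by (cases n) (simp_all add: RR_0 RR_Suc dom_rfun)
  ultimately show ?thesis unfolding I_legal_def by blast
qed

lemma legal_play:
  assumes "legal_strategy A k \<sigma>"
  shows "I_legal A k (RR A k \<sigma> \<alpha>) (PP A k \<sigma> \<alpha>) n \<and> PP A k \<sigma> \<alpha> n \<in> dom (RR A k \<sigma> \<alpha> n)"
proof (induction n rule: less_induct)
  case (less n)
  have leg: "\<forall>i\<le>n. I_legal A k (RR A k \<sigma> \<alpha>) (PP A k \<sigma> \<alpha>) i"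
  proof (intro allI impI)
    fix i assume "i \<le> n"
    then have "\<forall>j<i. PP A k \<sigma> \<alpha> j \<in> dom (RR A k \<sigma> \<alpha> j)" using less by auto
    then show "I_legal A k (RR A k \<sigma> \<alpha>) (PP A k \<sigma> \<alpha>) i" by (rule I_legal_PP)
  qed
  have "\<sigma> (map (RR A k \<sigma> \<alpha>) [0..<Suc n]) (map (PP A k \<sigma> \<alpha>) [0..<n]) \<in> dom (RR A k \<sigma> \<alpha> n)"
    using assms leg consistent_PP unfolding legal_strategy_def by blast
  then show ?case using leg PP_eq by (metis order_refl)
qed

definition bsel :: "('q, 'a, 'b) dpa \<Rightarrow> nat \<Rightarrow> 'q gk_strategy \<Rightarrow> (nat \<Rightarrow> 'a) \<Rightarrow> nat \<Rightarrow> 'b list" where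
  "bsel A k \<sigma> \<alpha> j = (SOME bs. length bs = k \<and>
     foldl (deltaT A) (fst (PP A k \<sigma> \<alpha> j), col A (fst (PP A k \<sigma> \<alpha> j))) (zip (blk k \<alpha> j) bs)
       = PP A k \<sigma> \<alpha> (Suc j))"

lemma bsel_spec:
  assumes "legal_strategy A k \<sigma>"
  shows "length (bsel A k \<sigma> \<alpha> j) = k \<and>
     foldl (deltaT A) (fst (PP A k \<sigma> \<alpha> j), col A (fst (PP A k \<sigma> \<alpha> j))) (zip (blk k \<alpha> j) (bsel A k \<sigma> \<alpha> j))
       = PP A k \<sigma> \<alpha> (Suc j)"
proof -
  have "PP A k \<sigma> \<alpha> (Suc j) \<in> dom (RR A k \<sigma> \<alpha> (Suc j))" using legal_play[OF assms] by blast
  also have "\<dots> = foldl (deltaP A) {(fst (PP A k \<sigma> \<alpha> j), col A (fst (PP A k \<sigma> \<alpha> j)))} (blk k \<alpha> j)"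
    using dom_RR_Suc[of A k \<sigma> \<alpha> j] legal_play[OF assms] by simp
  finally have "\<exists>bs. length bs = k \<and>
     foldl (deltaT A) (fst (PP A k \<sigma> \<alpha> j), col A (fst (PP A k \<sigma> \<alpha> j))) (zip (blk k \<alpha> j) bs)
       = PP A k \<sigma> \<alpha> (Suc j)"
    unfolding foldl_deltaP_mem by (auto simp: length_blk)
  then show ?thesis unfolding bsel_def by (rule someI_ex)
qed

lemma bsel_local:
  assumes "\<forall>m < Suc (Suc j) * k. \<alpha> m = \<beta> m"
  shows "bsel A k \<sigma> \<alpha> j = bsel A k \<sigma> \<beta> j"
proof -
  have "hist A k \<sigma> \<alpha> (Suc (Suc j)) = hist A k \<sigma> \<beta> (Suc (Suc j))" using hist_local assms by blast
  then have "map (PP A k \<sigma> \<alpha>) [0..<Suc (Suc j)] = map (PP A k \<sigma> \<beta>) [0..<Suc (Suc j)]"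
    using hist_eq by (metis snd_conv)
  then have p: "PP A k \<sigma> \<alpha> j = PP A k \<sigma> \<beta> j" "PP A k \<sigma> \<alpha> (Suc j) = PP A k \<sigma> \<beta> (Suc j)"
    by (metis (no_types, lifting) map_eq_conv atLeastLessThan_iff lessI less_SucI set_upt zero_le)+
  have "blk k \<alpha> j = blk k \<beta> j" using assms by (auto simp: blk_def)
  then show ?thesis unfolding bsel_def p by simp
qed

definition tau :: "('q, 'a, 'b) dpa \<Rightarrow> nat \<Rightarrow> 'q gk_strategy \<Rightarrow> 'a list \<Rightarrow> 'b" where
  "tau A k \<sigma> xs = (let i = length xs - 2 * k in bsel A k \<sigma> (nth xs) (i div k) ! (i mod k))"

lemma tau_eq:
  assumes "k > 0"
  shows "tau A k \<sigma> (map \<alpha> [0..<i + (2 * k - 1) + 1]) = bsel A k \<sigma> \<alpha> (i div k) ! (i mod k)"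
proof -
  have l: "i + (2 * k - 1) + 1 = i + 2 * k" using assms by simp
  have "(i div k) * k \<le> i" by (simp add: div_times_less_eq_dividend)
  then have le: "Suc (Suc (i div k)) * k \<le> i + 2 * k" by simp
  have "bsel A k \<sigma> (nth (map \<alpha> [0..<i + 2 * k])) (i div k) = bsel A k \<sigma> \<alpha> (i div k)"
  proof (rule bsel_local, intro allI impI)
    fix m assume "m < Suc (Suc (i div k)) * k"
    then have "m < i + 2 * k" using le by linarith
    then show "map \<alpha> [0..<i + 2 * k] ! m = \<alpha> m" by simp
  qed
  then show ?thesis unfolding tau_def l by simp
qed

lemma outcome_at:
  assumes "k > 0" "t < k"
  shows "delay_outcome (2 * k - 1) (tau A k \<sigma>) \<alpha> (j * k + t) = (\<alpha> (j * k + t), bsel A k \<sigma> \<alpha> j ! t)"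
proof -
  have "(j * k + t) div k = j" "(j * k + t) mod k = t" using assms by auto
  then show ?thesis by (simp only: delay_outcome_def tau_eq[OF assms(1)])
qed

lemma block_run:
  assumes k: "k > 0" and leg: "legal_strategy A k \<sigma>"
    and start: "run A w (j * k) = fst (PP A k \<sigma> \<alpha> j)"
    and w: "w = delay_outcome (2 * k - 1) (tau A k \<sigma>) \<alpha>"
    and t: "t \<le> k"
  shows "fst (foldl (deltaT A) (fst (PP A k \<sigma> \<alpha> j), col A (fst (PP A k \<sigma> \<alpha> j)))
              (zip (take t (blk k \<alpha> j)) (take t (bsel A k \<sigma> \<alpha> j)))) = run A w (j * k + t) \<and>
         (\<forall>s\<le>t. col A (run A w (j * k + s)) \<le> snd (foldl (deltaT A) (fst (PP A k \<sigma> \<alpha> j), col A (fst (PP A k \<sigma> \<alpha> j)))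
              (zip (take t (blk k \<alpha> j)) (take t (bsel A k \<sigma> \<alpha> j))))) \<and>
         (\<exists>s\<le>t. col A (run A w (j * k + s)) = snd (foldl (deltaT A) (fst (PP A k \<sigma> \<alpha> j), col A (fst (PP A k \<sigma> \<alpha> j)))
              (zip (take t (blk k \<alpha> j)) (take t (bsel A k \<sigma> \<alpha> j)))))"
  using t
proof (induction t)
  case 0 then show ?case using start by simp
next
  case (Suc t)
  let ?F = "\<lambda>t. foldl (deltaT A) (fst (PP A k \<sigma> \<alpha> j), col A (fst (PP A k \<sigma> \<alpha> j)))
              (zip (take t (blk k \<alpha> j)) (take t (bsel A k \<sigma> \<alpha> j)))"
  have tk: "t < k" using Suc.prems by simp
  have IH: "fst (?F t) = run A w (j * k + t)"
       "\<forall>s\<le>t. col A (run A w (j * k + s)) \<le> snd (?F t)"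
       "\<exists>s\<le>t. col A (run A w (j * k + s)) = snd (?F t)"
    using Suc tk by auto
  have lb: "length (bsel A k \<sigma> \<alpha> j) = k" using bsel_spec[OF leg] by blast
  have b: "blk k \<alpha> j ! t = \<alpha> (j * k + t)" using tk by (simp add: blk_def add.commute)
  have "?F (Suc t) = deltaT A (?F t) (blk k \<alpha> j ! t, bsel A k \<sigma> \<alpha> j ! t)"
    using tk lb by (simp add: take_Suc_conv_app_nth length_blk)
  also have "\<dots> = deltaT A (?F t) (w (j * k + t))"
  proof -
    have wo: "w (j * k + t) = (\<alpha> (j * k + t), bsel A k \<sigma> \<alpha> j ! t)"
      unfolding w by (rule outcome_at[OF k tk])
    show ?thesis unfolding wo b ..
  qed
  finally have F: "?F (Suc t) = (run A w (j * k + Suc t), max (snd (?F t)) (col A (run A w (j * k + Suc t))))"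
    using IH(1) by (simp add: deltaT_def Let_def)
  show ?case
  proof (intro conjI)
    show "fst (?F (Suc t)) = run A w (j * k + Suc t)" using F by simp
    show "\<forall>s\<le>Suc t. col A (run A w (j * k + s)) \<le> snd (?F (Suc t))"
      using F IH(2) by (auto simp: le_Suc_eq)
    show "\<exists>s\<le>Suc t. col A (run A w (j * k + s)) = snd (?F (Suc t))"
      using F IH(3) by (metis le_SucI max_def order_refl snd_conv)
  qed
qed

lemma run_blocks:
  assumes k: "k > 0" and leg: "legal_strategy A k \<sigma>"
    and w: "w = delay_outcome (2 * k - 1) (tau A k \<sigma>) \<alpha>"
  shows "run A w (j * k) = fst (PP A k \<sigma> \<alpha> j) \<and>
    (\<forall>s\<le>k. col A (run A w (j * k + s)) \<le> snd (PP A k \<sigma> \<alpha> (Suc j))) \<and>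
    (\<exists>s\<le>k. col A (run A w (j * k + s)) = snd (PP A k \<sigma> \<alpha> (Suc j)))"
proof (induction j)
  case 0
  have "PP A k \<sigma> \<alpha> 0 \<in> dom (RR A k \<sigma> \<alpha> 0)" using legal_play[OF leg] by blast
  then have st: "run A w (0 * k) = fst (PP A k \<sigma> \<alpha> 0)" by (simp add: RR_0 dom_rfun)
  have lb: "length (bsel A k \<sigma> \<alpha> 0) = k" using bsel_spec[OF leg] by blast
  have e: "foldl (deltaT A) (fst (PP A k \<sigma> \<alpha> 0), col A (fst (PP A k \<sigma> \<alpha> 0)))
              (zip (take k (blk k \<alpha> 0)) (take k (bsel A k \<sigma> \<alpha> 0))) = PP A k \<sigma> \<alpha> (Suc 0)"
    using bsel_spec[OF leg, of \<alpha> 0] lb by (simp add: length_blk)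
  show ?case using block_run[OF k leg st w order_refl] st unfolding e by simp
next
  case (Suc j)
  have lb: "length (bsel A k \<sigma> \<alpha> j) = k" using bsel_spec[OF leg] by blast
  have e: "foldl (deltaT A) (fst (PP A k \<sigma> \<alpha> j), col A (fst (PP A k \<sigma> \<alpha> j)))
              (zip (take k (blk k \<alpha> j)) (take k (bsel A k \<sigma> \<alpha> j))) = PP A k \<sigma> \<alpha> (Suc j)"
    using bsel_spec[OF leg, of \<alpha> j] lb by (simp add: length_blk)
  have st: "run A w (Suc j * k) = fst (PP A k \<sigma> \<alpha> (Suc j))"
    using block_run[OF k leg conjunct1[OF Suc.IH] w order_refl] unfolding e by (simp add: add.commute)
  have lb2: "length (bsel A k \<sigma> \<alpha> (Suc j)) = k" using bsel_spec[OF leg] by blast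
  have e2: "foldl (deltaT A) (fst (PP A k \<sigma> \<alpha> (Suc j)), col A (fst (PP A k \<sigma> \<alpha> (Suc j))))
              (zip (take k (blk k \<alpha> (Suc j))) (take k (bsel A k \<sigma> \<alpha> (Suc j)))) = PP A k \<sigma> \<alpha> (Suc (Suc j))"
    using bsel_spec[OF leg, of \<alpha> "Suc j"] lb2 by (simp add: length_blk)
  show ?case using block_run[OF k leg st w order_refl] st unfolding e2 by simp
qed

theorem mainTheorem3:
  fixes A :: "('q::finite, 'a::finite, 'b::finite) dpa" and k :: nat
  assumes "k > 0" and "wins_Gk A k"
  shows "wins_delay (2 * k - 1) (lang A)"
proof -
  have k: "k > 0" by fact
  obtain \<sigma> where leg: "legal_strategy A k \<sigma>" and win: "\<forall>r p. (\<forall>i. I_legal A k r p i) \<and> (\<forall>n. consistent_upto \<sigma> r p n)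
        \<longrightarrow> limsup_even (\<lambda>i. snd (p i))"
    using assms(2) unfolding wins_Gk_def by blast
  show ?thesis unfolding wins_delay_def
  proof (intro exI allI)
    fix \<alpha> :: "nat \<Rightarrow> 'a"
    define w where "w = delay_outcome (2 * k - 1) (tau A k \<sigma>) \<alpha>"
    let ?g = "\<lambda>i. snd (PP A k \<sigma> \<alpha> i)"
    let ?f = "\<lambda>i. col A (run A w i)"
    have "limsup_even ?g"
      using win legal_play[OF leg] consistent_PP by blast
    then obtain n where n: "limsup (\<lambda>i. enat (?g i)) = enat n" "even n"
      unfolding limsup_even_def by blast
    from limsup_enat_char[OF n(1)] obtain N where
      N: "\<forall>m\<ge>N. ?g m \<le> n" and fr: "\<forall>N. \<exists>m\<ge>N. ?g m = n" by blast
    have RB: "\<And>j. (\<forall>s\<le>k. ?f (j * k + s) \<le> ?g (Suc j)) \<and> (\<exists>s\<le>k. ?f (j * k + s) = ?g (Suc j))"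
      using run_blocks[OF k leg w_def] by blast
    have up: "\<forall>m\<ge>N * k. ?f m \<le> n"
    proof (intro allI impI)
      fix m assume m: "m \<ge> N * k"
      define j where "j = m div k"
      have mj: "m = j * k + m mod k" unfolding j_def by simp
      have "N * k div k \<le> m div k" using m by (rule div_le_mono)
      then have "N \<le> j" unfolding j_def using k by simp
      then have "?g (Suc j) \<le> n" using N by simp
      moreover have "?f (j * k + m mod k) \<le> ?g (Suc j)"
      proof -
        have "m mod k \<le> k" using k by (simp add: order_less_imp_le)
        then show ?thesis using RB[of j] by blast
      qed
      ultimately show "?f m \<le> n" using mj by simp
    qed
    have lo: "\<forall>M. \<exists>m\<ge>M. ?f m \<ge> n"
    proof
      fix M
      obtain J where J: "J \<ge> Suc M" "?g J = n" using fr by blast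
      then obtain j where j: "J = Suc j" by (cases J) auto
      obtain s where "s \<le> k" "?f (j * k + s) = n" using RB[of j] J j by auto
      moreover have "j * k + s \<ge> M"
      proof -
        have "M \<le> j" using J j by simp
        also have "j \<le> j * k" using k by simp
        finally show ?thesis by simp
      qed
      ultimately show "\<exists>m\<ge>M. ?f m \<ge> n" by (intro exI[of _ "j * k + s"]) auto
    qed
    have "limsup (\<lambda>i. enat (?f i)) = enat n"
      using limsup_enat_upper[OF up] limsup_enat_lower[OF lo] by (rule antisym)
    then show "delay_outcome (2 * k - 1) (tau A k \<sigma>) \<alpha> \<in> lang A"
      using n(2) unfolding lang_def limsup_even_def w_def by auto
  qed
qed

end
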